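(* Let $l\ge 1$, $d=2l+1$, and let $V=\mathbb{F}_3^{d}$ (or $S^d$ with $|S|=3$). Define relations on $V$: $S_0=\{(\mathbf x,\mathbf x)\}$, and for $j=1,2,3$, $S_j=\{(\mathbf x,\mathbf y): \delta(\mathbf x,\mathbf y)\ge 1,\ \delta(\mathbf x,\mathbf y)\equiv j\pmod 3\}$, where $\delta$ is the Hamming distance (this is a three-class association scheme, the KSD-scheme). Let $A_0=I,A_1,A_2,A_3$ be the adjacency matrices of $S_0,\dots,S_3$. Then $$A_1^3=\big(3^{4l-1}+(-1)^l3^{3l}+5\cdot 3^{2l-1}\big)A_1+\big(3^{4l-1}+(-1)^l3^{3l}+2\cdot 3^{2l-1}\big)(J-A_1),$$ $$A_2^3=\big(3^{4l-1}-(-1)^l3^{3l}+5\cdot 3^{2l-1}\big)A_2+\big(3^{4l-1}-(-1)^l3^{3l}+2\cdot 3^{2l-1}\big)(J-A_2),$$ $$(A_3+I)^3=\big(3^{4l-1}+2\cdot 3^{2l-1}\big)(A_3+I)+\big(3^{4l-1}-3^{2l-1}\big)(J-A_3-I).$$ Consequently $A_1$, $A_2$, $A_3+I$ are incidence matrices of three non-isomorphic symmetric partial geometric designs with parameters $(v,k;\alpha,\beta)$: $\big(3^{2l+1},\ 3^{2l}+(-1)^l3^l;\ 3^{4l-1}+(-1)^l3^{3l}+2\cdot 3^{2l-1},\ 3^{4l-1}+(-1)^l3^{3l}+5\cdot 3^{2l-1}\big)$, $\big(3^{2l+1},\ 3^{2l}-(-1)^l3^l;\ 3^{4l-1}-(-1)^l3^{3l}+2\cdot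 3^{2l-1},\ 3^{4l-1}-(-1)^l3^{3l}+5\cdot 3^{2l-1}\big)$, $\big(3^{2l+1},\ 3^{2l};\ 3^{4l-1}-3^{2l-1},\ 3^{4l-1}+2\cdot 3^{2l-1}\big)$.
   Context: $J$ is the all-ones matrix. A symmetric partial geometric design with parameters $(v,k;\alpha,\beta)$ is a design with $v$ points and $v$ blocks, each block of size $k$ and each point in $k$ blocks, whose incidence matrix $N$ satisfies $NN^TN=\beta N+\alpha(J-N)$. *)

theory Defs
  imports Main
begin

text \<open>Words of length d over an alphabet S (for S of size 3 this is F_3^d up to relabelling).\<close>
definition words :: "'a set \<Rightarrow> nat \<Rightarrow> 'a list set" where
  "words S d = {xs. length xs = d \<and> set xs \<subseteq> S}"

definition hamming :: "'a list \<Rightarrow> 'a list \<Rightarrow> nat" where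
  "hamming xs ys = card {i. i < length xs \<and> xs ! i \<noteq> ys ! i}"

type_synonym 'a imat = "'a \<Rightarrow> 'a \<Rightarrow> int"

definition mmult :: "'b set \<Rightarrow> ('a \<Rightarrow> 'b \<Rightarrow> int) \<Rightarrow> ('b \<Rightarrow> 'c \<Rightarrow> int) \<Rightarrow> 'a \<Rightarrow> 'c \<Rightarrow> int" where
  "mmult M A B = (\<lambda>x y. \<Sum>z\<in>M. A x z * B z y)"

definition mtrans :: "('a \<Rightarrow> 'b \<Rightarrow> int) \<Rightarrow> 'b \<Rightarrow> 'a \<Rightarrow> int" where
  "mtrans A = (\<lambda>x y. A y x)"

definition idm :: "'a \<Rightarrow> 'a \<Rightarrow> int" where
  "idm = (\<lambda>x y. if x = y then 1 else 0)"

definition onesm :: "'a \<Rightarrow> 'b \<Rightarrow> int" where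
  "onesm = (\<lambda>x y. 1)"

definition ksd_adj :: "nat \<Rightarrow> 'a list \<Rightarrow> 'a list \<Rightarrow> int" where
  "ksd_adj j x y =
     (if j = 0 then (if x = y then 1 else 0)
      else if 1 \<le> hamming x y \<and> hamming x y mod 3 = j mod 3 then 1 else 0)"

definition sym_partial_geometric_design ::
  "'p set \<Rightarrow> 'b set \<Rightarrow> ('p \<Rightarrow> 'b \<Rightarrow> int) \<Rightarrow> nat \<Rightarrow> int \<Rightarrow> int \<Rightarrow> int \<Rightarrow> bool" where
  "sym_partial_geometric_design P B N v k \<alpha> \<beta> \<longleftrightarrow>
     finite P \<and> finite B \<and> card P = v \<and> card B = v \<and>
     (\<forall>x\<in>P. \<forall>y\<in>B. N x y = 0 \<or> N x y = 1) \<and>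
     (\<forall>y\<in>B. (\<Sum>x\<in>P. N x y) = k) \<and>
     (\<forall>x\<in>P. (\<Sum>y\<in>B. N x y) = k) \<and>
     (\<forall>x\<in>P. \<forall>y\<in>B. mmult P (mmult B N (mtrans N)) N x y = \<beta> * N x y + \<alpha> * (1 - N x y))"

definition design_iso ::
  "'p set \<Rightarrow> 'b set \<Rightarrow> ('p \<Rightarrow> 'b \<Rightarrow> int) \<Rightarrow> 'q set \<Rightarrow> 'c set \<Rightarrow> ('q \<Rightarrow> 'c \<Rightarrow> int) \<Rightarrow> bool" where
  "design_iso P B N P' B' N' \<longleftrightarrow>
     (\<exists>\<sigma> \<tau>. bij_betw \<sigma> P P' \<and> bij_betw \<tau> B B' \<and>
        (\<forall>x\<in>P. \<forall>y\<in>B. N' (\<sigma> x) (\<tau> y) = N x y))"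

end

theory Submission
  imports Defs Complex_Main
begin


fun pk :: "('a \<Rightarrow> 'a \<Rightarrow> complex) \<Rightarrow> 'a list \<Rightarrow> 'a list \<Rightarrow> complex" where
  "pk f (a#xs) (b#ys) = f a b * pk f xs ys"
| "pk f _ _ = 1"

lemma words_0: "words S 0 = {[]}" by (auto simp: words_def)

lemma words_Suc: "words S (Suc d) = (\<lambda>(c,zs). c#zs) ` (S \<times> words S d)"
  unfolding words_def by (auto simp: length_Suc_conv image_iff)

lemma inj_cons: "inj_on (\<lambda>(c,zs). c#zs) A" by (auto simp: inj_on_def)

lemma finite_words: "finite S \<Longrightarrow> finite (words S d)"
  by (induction d) (auto simp: words_0 words_Suc)

lemma card_words: "finite S \<Longrightarrow> card (words S d) = card S ^ d"
  by (induction d) (auto simp: words_0 words_Suc card_image inj_cons card_cartesian_product)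

lemma pk_mult:
  assumes "finite S"
  shows "xs \<in> words S d \<Longrightarrow> ys \<in> words S d \<Longrightarrow>
    (\<Sum>z\<in>words S d. pk f xs z * pk g z ys) = pk (\<lambda>u v. \<Sum>c\<in>S. f u c * g c v) xs ys"
proof (induction d arbitrary: xs ys)
  case 0 then show ?case by (simp add: words_0)
next
  case (Suc d)
  from Suc.prems obtain a xs' b ys' where xs: "xs = a#xs'" "a\<in>S" "xs'\<in>words S d"
     and ys: "ys = b#ys'" "b\<in>S" "ys'\<in>words S d"
    by (cases xs; cases ys) (auto simp: words_def)
  have "(\<Sum>z\<in>words S (Suc d). pk f xs z * pk g z ys)
      = (\<Sum>p\<in>S \<times> words S d. pk f xs (fst p # snd p) * pk g (fst p # snd p) ys)"
    by (simp only: words_Suc, subst sum.reindex[OF inj_cons]) (simp add: case_prod_beta)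
  also have "\<dots> = (\<Sum>c\<in>S. \<Sum>zs\<in>words S d. (f a c * g c b) * (pk f xs' zs * pk g zs ys'))"
    by (simp add: sum.cartesian_product xs ys mult_ac case_prod_beta)
  also have "\<dots> = (\<Sum>c\<in>S. f a c * g c b) * (\<Sum>zs\<in>words S d. pk f xs' zs * pk g zs ys')"
    by (simp add: sum_distrib_left sum_distrib_right sum.swap[of _ S])
  also have "\<dots> = (\<Sum>c\<in>S. f a c * g c b) * pk (\<lambda>u v. \<Sum>c\<in>S. f u c * g c v) xs' ys'"
    using Suc.IH xs ys by simp
  finally show ?case using xs ys by simp
qed

lemma pk_cong: "length xs = length ys \<Longrightarrow> set xs \<subseteq> S \<Longrightarrow> set ys \<subseteq> S \<Longrightarrow>
   (\<And>u v. u \<in> S \<Longrightarrow> v \<in> S \<Longrightarrow> f u v = g u v) \<Longrightarrow> pk f xs ys = pk g xs ys"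
  by (induction xs ys rule: list_induct2) auto

lemma pk_scale: "length xs = length ys \<Longrightarrow> pk (\<lambda>u v. c * f u v) xs ys = c ^ length xs * pk f xs ys"
  by (induction xs ys rule: list_induct2) auto

lemma pk_one: "pk (\<lambda>u v. 1) xs ys = 1"
  by (induction xs arbitrary: ys; case_tac ys) auto

lemma hamming_Cons: "length xs = length ys \<Longrightarrow>
   hamming (a#xs) (b#ys) = (if a = b then 0 else 1) + hamming xs ys"
proof -
  assume len: "length xs = length ys"
  have e: "{i. i < length (a#xs) \<and> (a#xs) ! i \<noteq> (b#ys) ! i}
     = (if a = b then {} else {0}) \<union> Suc ` {i. i < length xs \<and> xs ! i \<noteq> ys ! i}"
    by (auto simp: image_iff less_Suc_eq_0_disj)
  show ?thesis unfolding hamming_def e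
    by (simp add: card_image)
qed

lemma hamming_sym: "length xs = length ys \<Longrightarrow> hamming xs ys = hamming ys xs"
  unfolding hamming_def by (metis)

lemma hamming_0: "length xs = length ys \<Longrightarrow> hamming xs ys = 0 \<longleftrightarrow> xs = ys"
  by (induction xs ys rule: list_induct2) (auto simp: hamming_Cons, simp add: hamming_def)

definition ee :: "complex \<Rightarrow> 'a \<Rightarrow> 'a \<Rightarrow> complex" where
  "ee q u v = (if u = v then 1 else q)"

lemma pk_ee: "length xs = length ys \<Longrightarrow> pk (ee q) xs ys = q ^ hamming xs ys"
  by (induction xs ys rule: list_induct2) (auto simp: hamming_Cons ee_def, simp add: hamming_def)

definition w :: complex where "w = Complex (-1/2) (sqrt 3 / 2)"

lemma w_eq: "1 + w + w^2 = 0"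
  by (simp add: w_def complex_eq_iff power2_eq_square)

lemma w3: "w^3 = 1"
proof -
  have "w^3 - 1 = (w - 1) * (1 + w + w^2)" by (simp add: algebra_simps power2_eq_square power3_eq_cube)
  then show ?thesis using w_eq by simp
qed

lemma ker_lemma:
  assumes "finite S" "x \<in> words S d" "y \<in> words S d"
    and "\<And>u v. u \<in> S \<Longrightarrow> v \<in> S \<Longrightarrow> (\<Sum>c\<in>S. f u c * g c v) = k * h u v"
  shows "(\<Sum>z\<in>words S d. pk f x z * pk g z y) = k ^ d * pk h x y"
proof -
  have "(\<Sum>z\<in>words S d. pk f x z * pk g z y) = pk (\<lambda>u v. \<Sum>c\<in>S. f u c * g c v) x y"
    using pk_mult[OF assms(1)] assms(2,3) by blast
  also have "\<dots> = pk (\<lambda>u v. k * h u v) x y"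
    using assms(2-4) by (intro pk_cong[where S=S]) (auto simp: words_def)
  also have "\<dots> = k ^ d * pk h x y" using assms(2,3) by (simp add: pk_scale words_def)
  finally show ?thesis .
qed

definition Kc :: "complex \<times> complex \<times> complex \<times> complex \<Rightarrow> 'a list \<Rightarrow> 'a list \<Rightarrow> complex" where
  "Kc p x y = (case p of (p0,p1,p2,p3) \<Rightarrow> p0 * pk (ee 0) x y + p1 * pk (\<lambda>u v. 1) x y
      + p2 * pk (ee w) x y + p3 * pk (ee (w^2)) x y)"

definition kmul :: "complex \<Rightarrow> complex \<Rightarrow> complex \<Rightarrow> complex \<times> complex \<times> complex \<times> complex
   \<Rightarrow> complex \<times> complex \<times> complex \<times> complex \<Rightarrow> complex \<times> complex \<times> complex \<times> complex" where
  "kmul N \<sigma> \<tau> p q = (case p of (p0,p1,p2,p3) \<Rightarrow> case q of (q0,q1,q2,q3) \<Rightarrow>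
     (p0*q0 + N*(p2*q3 + p3*q2),
      p0*q1 + p1*q0 + N*p1*q1 + \<sigma>*p1*q2 + \<tau>*p1*q3 + \<sigma>*p2*q1 + \<tau>*p3*q1,
      p0*q2 + p2*q0 + \<sigma>*p3*q3,
      p0*q3 + p3*q0 + \<tau>*p2*q2))"

context fixes S :: "'a set" assumes S3: "card S = 3"
begin

lemma S_fin: "finite S" using S3 by (metis card.infinite zero_neq_numeral)

lemma S_elems: obtains a b c where "S = {a,b,c}" "a \<noteq> b" "b \<noteq> c" "a \<noteq> c"
  using S3 by (auto simp: card_3_iff)

lemma sum_ee_ee: "u \<in> S \<Longrightarrow> v \<in> S \<Longrightarrow>
  (\<Sum>c\<in>S. ee p u c * ee q c v) = (if u = v then 1 + 2*p*q else p + q + p*q)"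
  by (rule S_elems) (auto simp: ee_def algebra_simps)

lemma sum_1_ee: "v \<in> S \<Longrightarrow> (\<Sum>c\<in>S. ee q c v) = 1 + 2 * q"
  by (rule S_elems) (auto simp: ee_def algebra_simps)

lemma sum_ee_1: "u \<in> S \<Longrightarrow> (\<Sum>c\<in>S. ee q u c) = 1 + 2 * q"
  by (rule S_elems) (auto simp: ee_def algebra_simps)

lemma sum_11: "(\<Sum>c\<in>S. (1::complex) * 1) = 3"
  using S3 by simp

lemma sum_d_f: "u \<in> S \<Longrightarrow> (\<Sum>c\<in>S. ee 0 u c * f c v) = 1 * f u v"
proof -
  assume u: "u \<in> S"
  have "(\<Sum>c\<in>S. ee 0 u c * f c v) = (\<Sum>c\<in>S. if c = u then f c v else 0)"
    by (rule sum.cong) (auto simp: ee_def)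
  then show ?thesis using u S_fin by simp
qed

lemma sum_f_d: "v \<in> S \<Longrightarrow> (\<Sum>c\<in>S. f u c * ee 0 c v) = 1 * f u v"
proof -
  assume u: "v \<in> S"
  have "(\<Sum>c\<in>S. f u c * ee 0 c v) = (\<Sum>c\<in>S. if c = v then f u c else 0)"
    by (rule sum.cong) (auto simp: ee_def)
  then show ?thesis using u S_fin by simp
qed


lemma Kc_mult:
  assumes x: "x \<in> words S d" and y: "y \<in> words S d"
  shows "(\<Sum>z\<in>words S d. Kc p x z * Kc q z y) = Kc (kmul (3^d) ((1+2*w)^d) ((1+2*w^2)^d) p q) x y"
proof -
  obtain p0 p1 p2 p3 where p: "p = (p0,p1,p2,p3)" by (cases p) auto
  obtain q0 q1 q2 q3 where q: "q = (q0,q1,q2,q3)" by (cases q) auto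
  let ?V = "words S d"
  let ?I = "pk (ee 0)" let ?J = "pk (\<lambda>u v. 1)" let ?E1 = "pk (ee w)" let ?E2 = "pk (ee (w^2))"
  have w4: "w^4 = w" using w3 by (metis mult_1 numeral_plus_one power_add power_one_right semiring_norm(2) semiring_norm(8))
  have w3': "w*(w*w) = 1" using w3 by (simp add: power3_eq_cube mult.assoc)
  have w4': "w*(w*(w*w)) = w" using w3' by (metis mult.assoc mult.commute mult_1)
  have we: "w + (1 + w*w) = 0" using w_eq by (simp add: power2_eq_square algebra_simps)
  have we2: "1 + (w + w*w) = 0" using w_eq by (simp add: power2_eq_square algebra_simps)
  note kl = ker_lemma[OF S_fin x y]
  have II: "(\<Sum>z\<in>?V. ?I x z * ?I z y) = 1^d * ?I x y" by (rule kl) (rule sum_d_f)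
  have IJ: "(\<Sum>z\<in>?V. ?I x z * ?J z y) = 1^d * ?J x y" by (rule kl) (rule sum_d_f)
  have IE1: "(\<Sum>z\<in>?V. ?I x z * ?E1 z y) = 1^d * ?E1 x y" by (rule kl) (rule sum_d_f)
  have IE2: "(\<Sum>z\<in>?V. ?I x z * ?E2 z y) = 1^d * ?E2 x y" by (rule kl) (rule sum_d_f)
  have JI: "(\<Sum>z\<in>?V. ?J x z * ?I z y) = 1^d * ?J x y" by (rule kl) (rule sum_f_d)
  have E1I: "(\<Sum>z\<in>?V. ?E1 x z * ?I z y) = 1^d * ?E1 x y" by (rule kl) (rule sum_f_d)
  have E2I: "(\<Sum>z\<in>?V. ?E2 x z * ?I z y) = 1^d * ?E2 x y" by (rule kl) (rule sum_f_d)
  have JJ: "(\<Sum>z\<in>?V. ?J x z * ?J z y) = 3^d * ?J x y" by (rule kl) (simp add: S3)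
  have JE1: "(\<Sum>z\<in>?V. ?J x z * ?E1 z y) = (1+2*w)^d * ?J x y" by (rule kl) (simp add: sum_1_ee)
  have JE2: "(\<Sum>z\<in>?V. ?J x z * ?E2 z y) = (1+2*w^2)^d * ?J x y" by (rule kl) (simp add: sum_1_ee)
  have E1J: "(\<Sum>z\<in>?V. ?E1 x z * ?J z y) = (1+2*w)^d * ?J x y" by (rule kl) (simp add: sum_ee_1)
  have E2J: "(\<Sum>z\<in>?V. ?E2 x z * ?J z y) = (1+2*w^2)^d * ?J x y" by (rule kl) (simp add: sum_ee_1)
  have E1E1: "(\<Sum>z\<in>?V. ?E1 x z * ?E1 z y) = (1+2*w^2)^d * ?E2 x y"
    by (rule kl, subst sum_ee_ee, assumption, assumption) (auto simp: ee_def algebra_simps w3' w4' we we2 power2_eq_square)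
  have E1E2: "(\<Sum>z\<in>?V. ?E1 x z * ?E2 z y) = 3^d * ?I x y"
    by (rule kl, subst sum_ee_ee, assumption, assumption) (auto simp: ee_def algebra_simps w3' w4' we we2 power2_eq_square)
  have E2E1: "(\<Sum>z\<in>?V. ?E2 x z * ?E1 z y) = 3^d * ?I x y"
    by (rule kl, subst sum_ee_ee, assumption, assumption) (auto simp: ee_def algebra_simps w3' w4' we we2 power2_eq_square)
  have E2E2: "(\<Sum>z\<in>?V. ?E2 x z * ?E2 z y) = (1+2*w)^d * ?E1 x y"
    by (rule kl, subst sum_ee_ee, assumption, assumption) (auto simp: ee_def algebra_simps w3' w4' we we2 power2_eq_square)
  have "(\<Sum>z\<in>?V. Kc p x z * Kc q z y) = (\<Sum>z\<in>?V.
      p0*q0*(?I x z * ?I z y) + p0*q1*(?I x z * ?J z y) + p0*q2*(?I x z * ?E1 z y) + p0*q3*(?I x z * ?E2 z y)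
    + p1*q0*(?J x z * ?I z y) + p1*q1*(?J x z * ?J z y) + p1*q2*(?J x z * ?E1 z y) + p1*q3*(?J x z * ?E2 z y)
    + p2*q0*(?E1 x z * ?I z y) + p2*q1*(?E1 x z * ?J z y) + p2*q2*(?E1 x z * ?E1 z y) + p2*q3*(?E1 x z * ?E2 z y)
    + p3*q0*(?E2 x z * ?I z y) + p3*q1*(?E2 x z * ?J z y) + p3*q2*(?E2 x z * ?E1 z y) + p3*q3*(?E2 x z * ?E2 z y))"
    by (rule sum.cong) (simp_all add: Kc_def p q algebra_simps)
  also have "\<dots> = p0*q0*(\<Sum>z\<in>?V. ?I x z * ?I z y) + p0*q1*(\<Sum>z\<in>?V. ?I x z * ?J z y)
    + p0*q2*(\<Sum>z\<in>?V. ?I x z * ?E1 z y) + p0*q3*(\<Sum>z\<in>?V. ?I x z * ?E2 z y)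
    + p1*q0*(\<Sum>z\<in>?V. ?J x z * ?I z y) + p1*q1*(\<Sum>z\<in>?V. ?J x z * ?J z y)
    + p1*q2*(\<Sum>z\<in>?V. ?J x z * ?E1 z y) + p1*q3*(\<Sum>z\<in>?V. ?J x z * ?E2 z y)
    + p2*q0*(\<Sum>z\<in>?V. ?E1 x z * ?I z y) + p2*q1*(\<Sum>z\<in>?V. ?E1 x z * ?J z y)
    + p2*q2*(\<Sum>z\<in>?V. ?E1 x z * ?E1 z y) + p2*q3*(\<Sum>z\<in>?V. ?E1 x z * ?E2 z y)
    + p3*q0*(\<Sum>z\<in>?V. ?E2 x z * ?I z y) + p3*q1*(\<Sum>z\<in>?V. ?E2 x z * ?J z y)
    + p3*q2*(\<Sum>z\<in>?V. ?E2 x z * ?E1 z y) + p3*q3*(\<Sum>z\<in>?V. ?E2 x z * ?E2 z y)"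
    by (simp only: sum.distrib sum_distrib_left)
  also have "\<dots> = Kc (kmul (3^d) ((1+2*w)^d) ((1+2*w^2)^d) p q) x y"
    unfolding II IJ IE1 IE2 JI JJ JE1 JE2 E1I E1J E1E1 E1E2 E2I E2J E2E1 E2E2
    by (simp add: Kc_def kmul_def p q algebra_simps)
  finally show ?thesis .
qed

end



lemma wpow: "w^h = w^(h mod 3)"
proof -
  have "w^h = w^(3*(h div 3) + h mod 3)" by simp
  also have "\<dots> = (w^3)^(h div 3) * w^(h mod 3)" by (simp only: power_add power_mult)
  then show ?thesis using w3 by simp
qed

lemma Kc_val: "length x = length y \<Longrightarrow> Kc (p0,p1,p2,p3) x y
   = p0 * (if x = y then 1 else 0) + p1 + p2 * w^(hamming x y) + p3 * (w^2)^(hamming x y)"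
  by (simp add: Kc_def pk_ee pk_one hamming_0 power_0_left)

lemma ent1: "length x = length y \<Longrightarrow> of_int (ksd_adj 1 x y) = Kc (0,1/3,1/3*w^2,1/3*w) x y"
proof -
  assume len: "length x = length y"
  define h where "h = hamming x y"
  have c: "h mod 3 = 0 \<or> h mod 3 = 1 \<or> h mod 3 = 2" by arith
  have e: "(w^2)^h = (w^(h mod 3))^2" by (metis power_mult mult.commute wpow)
  have ww: "w*w = -1-w" using w_eq by algebra
  have w3': "w*(w*w) = 1" using w3 by (simp add: power3_eq_cube mult.assoc)
  have e2: "w^h = w^(h mod 3)" by (rule wpow)
  show ?thesis unfolding Kc_val[OF len] ksd_adj_def h_def[symmetric] e e2
    using c apply (elim disjE)
    apply (simp_all add: power2_eq_square)
    apply (simp_all add: field_simps ww w3')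
    done
qed

lemma ent2: "length x = length y \<Longrightarrow> of_int (ksd_adj 2 x y) = Kc (0,1/3,1/3*w,1/3*w^2) x y"
proof -
  assume len: "length x = length y"
  define h where "h = hamming x y"
  have c: "h mod 3 = 0 \<or> h mod 3 = 1 \<or> h mod 3 = 2" by arith
  have e: "(w^2)^h = (w^(h mod 3))^2" by (metis power_mult mult.commute wpow)
  have ww: "w*w = -1-w" using w_eq by algebra
  have w3': "w*(w*w) = 1" using w3 by (simp add: power3_eq_cube mult.assoc)
  have e2: "w^h = w^(h mod 3)" by (rule wpow)
  show ?thesis unfolding Kc_val[OF len] ksd_adj_def h_def[symmetric] e e2
    using c apply (elim disjE)
    apply (simp_all add: power2_eq_square)
    apply (simp_all add: field_simps ww w3')
    done
qed

lemma ent3: "length x = length y \<Longrightarrow> of_int (ksd_adj 3 x y + ksd_adj 0 x y) = Kc (0,1/3,1/3,1/3) x y"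
proof -
  assume len: "length x = length y"
  define h where "h = hamming x y"
  have c: "h mod 3 = 0 \<or> h mod 3 = 1 \<or> h mod 3 = 2" by arith
  have e: "(w^2)^h = (w^(h mod 3))^2" by (metis power_mult mult.commute wpow)
  have ww: "w*w = -1-w" using w_eq by algebra
  have w3': "w*(w*w) = 1" using w3 by (simp add: power3_eq_cube mult.assoc)
  have hz: "h = 0 \<longleftrightarrow> x = y" using hamming_0[OF len] h_def by simp
  have e2: "w^h = w^(h mod 3)" by (rule wpow)
  show ?thesis unfolding Kc_val[OF len] ksd_adj_def h_def[symmetric] e e2
    using c hz apply (elim disjE)
    apply (simp_all add: power2_eq_square)
    apply (simp_all add: field_simps ww w3')
    apply (auto simp: Suc_le_eq)
    done
qed


lemma alg1:
  fixes P Q t :: complex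
  assumes we: "1 + w + w^2 = 0" and q: "Q^2 = P" and t: "3*t = 1"
  shows "kmul (3*P) (Q*(1+2*w)) (-(Q*(1+2*w))) (kmul (3*P) (Q*(1+2*w)) (-(Q*(1+2*w))) (0,t,t*w^2,t*w) (0,t,t*w^2,t*w)) (0,t,t*w^2,t*w)
   = (0, (P^2*t + Q*P + 2*P*t) + ((P^2*t + Q*P + 5*P*t) - (P^2*t + Q*P + 2*P*t))*t,
         ((P^2*t + Q*P + 5*P*t) - (P^2*t + Q*P + 2*P*t))*t*w^2, ((P^2*t + Q*P + 5*P*t) - (P^2*t + Q*P + 2*P*t))*t*w)"
  unfolding kmul_def prod.case prod.inject
  by (intro conjI; ((simp; fail) | (use we q t in algebra)))

lemma alg2:
  fixes P Q t :: complex
  assumes we: "1 + w + w^2 = 0" and q: "Q^2 = P" and t: "3*t = 1"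
  shows "kmul (3*P) (Q*(1+2*w)) (-(Q*(1+2*w))) (kmul (3*P) (Q*(1+2*w)) (-(Q*(1+2*w))) (0,t,t*w,t*w^2) (0,t,t*w,t*w^2)) (0,t,t*w,t*w^2)
   = (0, (P^2*t - Q*P + 2*P*t) + ((P^2*t - Q*P + 5*P*t) - (P^2*t - Q*P + 2*P*t))*t,
         ((P^2*t - Q*P + 5*P*t) - (P^2*t - Q*P + 2*P*t))*t*w, ((P^2*t - Q*P + 5*P*t) - (P^2*t - Q*P + 2*P*t))*t*w^2)"
  unfolding kmul_def prod.case prod.inject
  by (intro conjI; ((simp; fail) | (use we q t in algebra)))

lemma alg3:
  fixes P Q t :: complex
  assumes we: "1 + w + w^2 = 0" and q: "Q^2 = P" and t: "3*t = 1"
  shows "kmul (3*P) (Q*(1+2*w)) (-(Q*(1+2*w))) (kmul (3*P) (Q*(1+2*w)) (-(Q*(1+2*w))) (0,t,t*1,t*1) (0,t,t*1,t*1)) (0,t,t*1,t*1)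
   = (0, (P^2*t - P*t) + ((P^2*t + 2*P*t) - (P^2*t - P*t))*t,
         ((P^2*t + 2*P*t) - (P^2*t - P*t))*t*1, ((P^2*t + 2*P*t) - (P^2*t - P*t))*t*1)"
  unfolding kmul_def prod.case prod.inject
  by (intro conjI; ((simp; fail) | (use we q t in algebra)))

lemma algr1:
  fixes P Q t :: complex
  assumes we: "1 + w + w^2 = 0" and q: "Q^2 = P" and t: "3*t = 1"
  shows "kmul (3*P) (Q*(1+2*w)) (-(Q*(1+2*w))) (0,t,t*w^2,t*w) (0,1,0,0) = (0, P + Q, 0, 0)"
  unfolding kmul_def prod.case prod.inject
  by (intro conjI; ((simp; fail) | (use we q t in algebra)))

lemma algr2:
  fixes P Q t :: complex
  assumes we: "1 + w + w^2 = 0" and q: "Q^2 = P" and t: "3*t = 1"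
  shows "kmul (3*P) (Q*(1+2*w)) (-(Q*(1+2*w))) (0,t,t*w,t*w^2) (0,1,0,0) = (0, P - Q, 0, 0)"
  unfolding kmul_def prod.case prod.inject
  by (intro conjI; ((simp; fail) | (use we q t in algebra)))

lemma algr3:
  fixes P Q t :: complex
  assumes we: "1 + w + w^2 = 0" and q: "Q^2 = P" and t: "3*t = 1"
  shows "kmul (3*P) (Q*(1+2*w)) (-(Q*(1+2*w))) (0,t,t*1,t*1) (0,1,0,0) = (0, P, 0, 0)"
  unfolding kmul_def prod.case prod.inject
  by (intro conjI; ((simp; fail) | (use we q t in algebra)))

lemma fin_lemma: "length x = length y \<Longrightarrow>
  Kc (0, a + (b-a)*t, (b-a)*t*u2, (b-a)*t*u3) x y = b * Kc (0,t,t*u2,t*u3) x y + a * (1 - Kc (0,t,t*u2,t*u3) x y)"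
  by (simp add: Kc_val algebra_simps)

lemma pow_facts:
  shows "(1+2*w)^(2*l+1) = (-3)^l*(1+2*w)" "(1+2*w^2)^(2*l+1) = -((-3)^l*(1+2*w))"
    "(3::complex)^(2*l+1) = 3*9^l"
proof -
  have s2: "(1+2*w)^2 = -3" using w_eq by algebra
  show 1: "(1+2*w)^(2*l+1) = (-3)^l*(1+2*w)"
    by (simp add: power_add power_mult s2)
  have h: "1+2*w^2 = -(1+2*w)" using w_eq by algebra
  have "(1+2*w^2)^(2*l+1) = (-(1+2*w))^(2*l+1)" by (simp only: h)
  also have "\<dots> = -((1+2*w)^(2*l+1))" by (rule power_minus_odd) simp
  finally show "(1+2*w^2)^(2*l+1) = -((-3)^l*(1+2*w))" using 1 by simp
  show "(3::complex)^(2*l+1) = 3*9^l" by (simp add: power_add power_mult)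
qed

context fixes S :: "'a set" assumes S3: "card S = 3"
begin

lemmas Kc_mult3 = Kc_mult[OF S3]

lemma cube_lemma:
  fixes A :: "'a list \<Rightarrow> 'a list \<Rightarrow> int"
  assumes A: "\<And>x y. x \<in> words S d \<Longrightarrow> y \<in> words S d \<Longrightarrow> of_int (A x y) = Kc X x y"
    and x: "x \<in> words S d" and y: "y \<in> words S d"
  shows "(of_int (mmult (words S d) (mmult (words S d) A A) A x y) :: complex)
     = Kc (kmul (3^d) ((1+2*w)^d) ((1+2*w^2)^d) (kmul (3^d) ((1+2*w)^d) ((1+2*w^2)^d) X X) X) x y"
proof -
  let ?V = "words S d" let ?k = "kmul (3^d) ((1+2*w)^d) ((1+2*w^2)^d)"
  have 2: "of_int (mmult ?V A A x z) = Kc (?k X X) x z" if "x \<in> ?V" "z \<in> ?V" for x z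
  proof -
    have "(of_int (mmult ?V A A x z) :: complex) = (\<Sum>u\<in>?V. Kc X x u * Kc X u z)"
      unfolding mmult_def of_int_sum of_int_mult using that by (intro sum.cong) (auto simp: A)
    also have "\<dots> = Kc (?k X X) x z" using Kc_mult3 that by blast
    finally show ?thesis .
  qed
  have "(of_int (mmult ?V (mmult ?V A A) A x y) :: complex) = (\<Sum>z\<in>?V. of_int (mmult ?V A A x z) * of_int (A z y))"
    unfolding mmult_def[of ?V "mmult ?V A A" A] of_int_sum of_int_mult by simp
  also have "\<dots> = (\<Sum>z\<in>?V. Kc (?k X X) x z * Kc X z y)"
    using x y by (intro sum.cong) (auto simp: A 2)
  also have "\<dots> = Kc (?k (?k X X) X) x y" using Kc_mult3 x y by blast
  finally show ?thesis .
qed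

lemma row_lemma:
  fixes A :: "'a list \<Rightarrow> 'a list \<Rightarrow> int"
  assumes A: "\<And>x y. x \<in> words S d \<Longrightarrow> y \<in> words S d \<Longrightarrow> of_int (A x y) = Kc X x y"
    and x: "x \<in> words S d"
  shows "(of_int (\<Sum>y\<in>words S d. A x y) :: complex)
     = Kc (kmul (3^d) ((1+2*w)^d) ((1+2*w^2)^d) X (0,1,0,0)) x x"
proof -
  have "(of_int (\<Sum>y\<in>words S d. A x y) :: complex) = (\<Sum>y\<in>words S d. Kc X x y * Kc (0,1,0,0) y x)"
    unfolding of_int_sum using x by (intro sum.cong) (auto simp: A Kc_def pk_one)
  also have "\<dots> = Kc (kmul (3^d) ((1+2*w)^d) ((1+2*w^2)^d) X (0,1,0,0)) x x" using Kc_mult3 x by blast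
  finally show ?thesis .
qed
end



lemma design_lemma:
  fixes A :: "'a \<Rightarrow> 'a \<Rightarrow> int"
  assumes fin: "finite V" and cardV: "card V = v"
  and sym: "\<And>x y. x\<in>V \<Longrightarrow> y\<in>V \<Longrightarrow> A x y = A y x"
  and b01: "\<And>x y. A x y = 0 \<or> A x y = 1"
  and row: "\<And>x. x\<in>V \<Longrightarrow> (\<Sum>y\<in>V. A x y) = k"
  and cube: "\<forall>x\<in>V. \<forall>y\<in>V. mmult V (mmult V A A) A x y = \<beta> * A x y + \<alpha> * (onesm x y - A x y)"
  shows "sym_partial_geometric_design V V A v k \<alpha> \<beta>"
  unfolding sym_partial_geometric_design_def
proof (intro conjI ballI)
  show "finite V" "finite V" "card V = v" "card V = v" using fin cardV by auto
  fix x y assume x: "x \<in> V" and y: "y \<in> V"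
  show "A x y = 0 \<or> A x y = 1" using b01 by blast
  show "(\<Sum>x\<in>V. A x y) = k" using row[OF y] sym y by (metis (no_types, lifting) sum.cong)
  show "(\<Sum>y\<in>V. A x y) = k" using row[OF x] .
  have "mmult V (mmult V A (mtrans A)) A x y = mmult V (mmult V A A) A x y"
    unfolding mmult_def mtrans_def using sym by (intro sum.cong refl arg_cong2[where f="(*)"] ) auto
  then show "mmult V (mmult V A (mtrans A)) A x y = \<beta> * A x y + \<alpha> * (1 - A x y)"
    using cube x y by (simp add: onesm_def)
qed

lemma noniso:
  fixes A B :: "'a \<Rightarrow> 'a \<Rightarrow> int"
  assumes iso: "design_iso V V A V V B" and ne: "V \<noteq> {}"
    and rA: "\<And>x. x\<in>V \<Longrightarrow> (\<Sum>y\<in>V. A x y) = kA"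
    and rB: "\<And>x. x\<in>V \<Longrightarrow> (\<Sum>y\<in>V. B x y) = kB"
  shows "kA = kB"
proof -
  obtain \<sigma> \<tau> where s: "bij_betw \<sigma> V V" and t: "bij_betw \<tau> V V"
    and e: "\<forall>x\<in>V. \<forall>y\<in>V. B (\<sigma> x) (\<tau> y) = A x y"
    using iso unfolding design_iso_def by blast
  obtain x where x: "x \<in> V" using ne by blast
  have sx: "\<sigma> x \<in> V" using s x bij_betwE by blast
  have "kB = (\<Sum>y\<in>V. B (\<sigma> x) y)" using rB[OF sx] by simp
  also have "\<dots> = (\<Sum>y\<in>V. B (\<sigma> x) (\<tau> y))" using sum.reindex_bij_betw[OF t, of "B (\<sigma> x)"] by simp
  also have "\<dots> = (\<Sum>y\<in>V. A x y)" using e x by simp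
  also have "\<dots> = kA" using rA[OF x] .
  finally show ?thesis by simp
qed

lemma ksd_sym: "length x = length y \<Longrightarrow> ksd_adj j x y = ksd_adj j y x"
  by (simp add: ksd_adj_def hamming_sym)

context fixes S :: "'a set" assumes S3: "card S = 3"
begin

lemma matrix_facts:
  fixes A :: "'a list \<Rightarrow> 'a list \<Rightarrow> int" and a b kc u2 u3 :: complex and \<alpha> \<beta> k :: int
  assumes E: "\<And>x y. x\<in>words S (2*l+1) \<Longrightarrow> y\<in>words S (2*l+1) \<Longrightarrow> of_int (A x y) = Kc (0,1/3,1/3*u2,1/3*u3) x y"
   and cubeX: "kmul (3*9^l) ((-3)^l*(1+2*w)) (-((-3)^l*(1+2*w)))
        (kmul (3*9^l) ((-3)^l*(1+2*w)) (-((-3)^l*(1+2*w))) (0,1/3,1/3*u2,1/3*u3) (0,1/3,1/3*u2,1/3*u3)) (0,1/3,1/3*u2,1/3*u3)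
        = (0, a + (b-a)*(1/3), (b-a)*(1/3)*u2, (b-a)*(1/3)*u3)"
   and rowX: "kmul (3*9^l) ((-3)^l*(1+2*w)) (-((-3)^l*(1+2*w))) (0,1/3,1/3*u2,1/3*u3) (0,1,0,0) = (0,kc,0,0)"
   and cb: "of_int \<beta> = b" and ca: "of_int \<alpha> = a" and ck: "of_int k = kc"
  shows "\<forall>x\<in>words S (2*l+1). \<forall>y\<in>words S (2*l+1). mmult (words S (2*l+1)) (mmult (words S (2*l+1)) A A) A x y = \<beta> * A x y + \<alpha> * (onesm x y - A x y)"
    and "\<And>x. x\<in>words S (2*l+1) \<Longrightarrow> (\<Sum>y\<in>words S (2*l+1). A x y) = k"
proof -
  let ?V = "words S (2*l+1)"
  note pf = pow_facts[of l]
  show "\<forall>x\<in>?V. \<forall>y\<in>?V. mmult ?V (mmult ?V A A) A x y = \<beta> * A x y + \<alpha> * (onesm x y - A x y)"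
  proof (intro ballI)
    fix x y assume x: "x \<in> ?V" and y: "y \<in> ?V"
    have len: "length x = length y" using x y by (simp add: words_def)
    have "(of_int (mmult ?V (mmult ?V A A) A x y) :: complex)
       = Kc (0, a + (b-a)*(1/3), (b-a)*(1/3)*u2, (b-a)*(1/3)*u3) x y"
      using cube_lemma[OF S3 E x y] unfolding pf cubeX by simp
    also have "\<dots> = b * Kc (0,1/3,1/3*u2,1/3*u3) x y + a * (1 - Kc (0,1/3,1/3*u2,1/3*u3) x y)"
      by (rule fin_lemma[OF len])
    also have "\<dots> = of_int (\<beta> * A x y + \<alpha> * (onesm x y - A x y))"
      using E[OF x y] by (simp add: cb ca onesm_def)
    finally show "mmult ?V (mmult ?V A A) A x y = \<beta> * A x y + \<alpha> * (onesm x y - A x y)"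
      by (metis of_int_eq_iff)
  qed
  fix x assume x: "x \<in> ?V"
  have "(of_int (\<Sum>y\<in>?V. A x y) :: complex) = Kc (0,kc,0,0) x x"
    using row_lemma[OF S3 E x] unfolding pf rowX by simp
  also have "\<dots> = of_int k" by (simp add: Kc_def pk_one ck)
  finally show "(\<Sum>y\<in>?V. A x y) = k" by (metis of_int_eq_iff)
qed

end



theorem corollary6p3:
  fixes S :: "'a set" and l :: nat
  assumes "card S = 3" and "l \<ge> 1"
  defines "V \<equiv> words S (2 * l + 1)"
  defines "A1 \<equiv> (ksd_adj 1 :: 'a list \<Rightarrow> 'a list \<Rightarrow> int)"
      and "A2 \<equiv> (ksd_adj 2 :: 'a list \<Rightarrow> 'a list \<Rightarrow> int)"
      and "A3I \<equiv> (\<lambda>x y. ksd_adj 3 x y + ksd_adj 0 x y :: int)"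
  shows
   "(\<forall>x\<in>V. \<forall>y\<in>V. mmult V (mmult V A1 A1) A1 x y =
        (3^(4*l-1) + (-1)^l * 3^(3*l) + 5 * 3^(2*l-1)) * A1 x y
      + (3^(4*l-1) + (-1)^l * 3^(3*l) + 2 * 3^(2*l-1)) * (onesm x y - A1 x y))
  \<and> (\<forall>x\<in>V. \<forall>y\<in>V. mmult V (mmult V A2 A2) A2 x y =
        (3^(4*l-1) - (-1)^l * 3^(3*l) + 5 * 3^(2*l-1)) * A2 x y
      + (3^(4*l-1) - (-1)^l * 3^(3*l) + 2 * 3^(2*l-1)) * (onesm x y - A2 x y))
  \<and> (\<forall>x\<in>V. \<forall>y\<in>V. mmult V (mmult V A3I A3I) A3I x y =
        (3^(4*l-1) + 2 * 3^(2*l-1)) * A3I x y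
      + (3^(4*l-1) - 3^(2*l-1)) * (onesm x y - A3I x y))
  \<and> sym_partial_geometric_design V V A1 (3^(2*l+1)) (3^(2*l) + (-1)^l * 3^l)
      (3^(4*l-1) + (-1)^l * 3^(3*l) + 2 * 3^(2*l-1)) (3^(4*l-1) + (-1)^l * 3^(3*l) + 5 * 3^(2*l-1))
  \<and> sym_partial_geometric_design V V A2 (3^(2*l+1)) (3^(2*l) - (-1)^l * 3^l)
      (3^(4*l-1) - (-1)^l * 3^(3*l) + 2 * 3^(2*l-1)) (3^(4*l-1) - (-1)^l * 3^(3*l) + 5 * 3^(2*l-1))
  \<and> sym_partial_geometric_design V V A3I (3^(2*l+1)) (3^(2*l))
      (3^(4*l-1) - 3^(2*l-1)) (3^(4*l-1) + 2 * 3^(2*l-1))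
  \<and> \<not> design_iso V V A1 V V A2
  \<and> \<not> design_iso V V A1 V V A3I
  \<and> \<not> design_iso V V A2 V V A3I"
proof -
  have S3: "card S = 3" using assms(1) .
  have fin: "finite S" using S3 by (metis card.infinite zero_neq_numeral)
  have lenV: "\<And>x. x \<in> V \<Longrightarrow> length x = 2*l+1" by (simp add: V_def words_def)
  have cardV: "card V = 3^(2*l+1)" using card_words[OF fin] S3 V_def by simp
  have neV: "V \<noteq> {}" using cardV by (metis card.empty power_not_zero zero_neq_numeral)
  have finV: "finite V" using finite_words[OF fin] V_def by simp
  have q: "((-3::complex)^l)^2 = 9^l"
  proof -
    have "((-3::complex)^l)^2 = ((-3)^2)^l" by (metis power_mult mult.commute)
    then show ?thesis by simp
  qed
  have t: "3*(1/3::complex) = 1" by simp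
  have c41: "(3::complex)^(4*l-1) = (9^l)^2*(1/3)"
  proof -
    have "(3::complex)^(4*l-1) * 3 = 3^(4*l)" using assms(2) by (metis Suc_diff_1 mult_pos_pos pos2 power_Suc2 zero_less_numeral less_le_trans[OF zero_less_one] )
    also have "\<dots> = 3^(2*(2*l))" by simp
    also have "\<dots> = (3^2)^(2*l)" by (rule power_mult)
    also have "\<dots> = 9^(l*2)" by (simp add: mult.commute)
    also have "\<dots> = (9^l)^2" by (rule power_mult)
    finally show ?thesis by (simp add: field_simps)
  qed
  have c21: "(3::complex)^(2*l-1) = 9^l*(1/3)"
  proof -
    have "(3::complex)^(2*l-1) * 3 = 3^(2*l)" using assms(2) by (metis Suc_diff_1 mult_pos_pos pos2 power_Suc2 zero_less_numeral less_le_trans[OF zero_less_one] )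
    also have "\<dots> = 9^l" by (subst power_mult) simp
    finally show ?thesis by (simp add: field_simps)
  qed
  have c33: "(-1::complex)^l * 3^(3*l) = (-3)^l * 9^l"
    by (simp add: power_mult power_mult_distrib[symmetric])
  have c2l: "(3::complex)^(2*l) = 9^l" by (subst power_mult) simp
  have c1l: "(-1::complex)^l * 3^l = (-3)^l" by (simp add: power_mult_distrib[symmetric])
  let ?P = "(9::complex)^l" let ?Q = "(-3::complex)^l"
  have cb1: "of_int (3^(4*l-1) + (-1)^l * 3^(3*l) + 5 * 3^(2*l-1) :: int) = ?P^2*(1/3) + ?Q*?P + 5*?P*(1/3)"
  proof -
    have "of_int (3^(4*l-1) + (-1)^l * 3^(3*l) + 5 * 3^(2*l-1) :: int) = (3::complex)^(4*l-1) + (-1)^l * 3^(3*l) + 5 * 3^(2*l-1)" by simp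
    also have "\<dots> = ?P^2*(1/3) + ?Q*?P + 5*?P*(1/3)" unfolding c41 c33 c21 by (simp add: algebra_simps)
    finally show ?thesis .
  qed
  have ca1: "of_int (3^(4*l-1) + (-1)^l * 3^(3*l) + 2 * 3^(2*l-1) :: int) = ?P^2*(1/3) + ?Q*?P + 2*?P*(1/3)"
  proof -
    have "of_int (3^(4*l-1) + (-1)^l * 3^(3*l) + 2 * 3^(2*l-1) :: int) = (3::complex)^(4*l-1) + (-1)^l * 3^(3*l) + 2 * 3^(2*l-1)" by simp
    also have "\<dots> = ?P^2*(1/3) + ?Q*?P + 2*?P*(1/3)" unfolding c41 c33 c21 by (simp add: algebra_simps)
    finally show ?thesis .
  qed
  have cb2: "of_int (3^(4*l-1) - (-1)^l * 3^(3*l) + 5 * 3^(2*l-1) :: int) = ?P^2*(1/3) - ?Q*?P + 5*?P*(1/3)"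
  proof -
    have "of_int (3^(4*l-1) - (-1)^l * 3^(3*l) + 5 * 3^(2*l-1) :: int) = (3::complex)^(4*l-1) - (-1)^l * 3^(3*l) + 5 * 3^(2*l-1)" by simp
    also have "\<dots> = ?P^2*(1/3) - ?Q*?P + 5*?P*(1/3)" unfolding c41 c33 c21 by (simp add: algebra_simps)
    finally show ?thesis .
  qed
  have ca2: "of_int (3^(4*l-1) - (-1)^l * 3^(3*l) + 2 * 3^(2*l-1) :: int) = ?P^2*(1/3) - ?Q*?P + 2*?P*(1/3)"
  proof -
    have "of_int (3^(4*l-1) - (-1)^l * 3^(3*l) + 2 * 3^(2*l-1) :: int) = (3::complex)^(4*l-1) - (-1)^l * 3^(3*l) + 2 * 3^(2*l-1)" by simp
    also have "\<dots> = ?P^2*(1/3) - ?Q*?P + 2*?P*(1/3)" unfolding c41 c33 c21 by (simp add: algebra_simps)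
    finally show ?thesis .
  qed
  have cb3: "of_int (3^(4*l-1) + 2 * 3^(2*l-1) :: int) = ?P^2*(1/3) + 2*?P*(1/3)"
  proof -
    have "of_int (3^(4*l-1) + 2 * 3^(2*l-1) :: int) = (3::complex)^(4*l-1) + 2 * 3^(2*l-1)" by simp
    also have "\<dots> = ?P^2*(1/3) + 2*?P*(1/3)" unfolding c41 c21 by (simp add: algebra_simps)
    finally show ?thesis .
  qed
  have ca3: "of_int (3^(4*l-1) - 3^(2*l-1) :: int) = ?P^2*(1/3) - ?P*(1/3)"
  proof -
    have "of_int (3^(4*l-1) - 3^(2*l-1) :: int) = (3::complex)^(4*l-1) - 3^(2*l-1)" by simp
    also have "\<dots> = ?P^2*(1/3) - ?P*(1/3)" unfolding c41 c21 by (simp add: algebra_simps)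
    finally show ?thesis .
  qed
  have ck1: "of_int (3^(2*l) + (-1)^l * 3^l :: int) = ?P + ?Q"
  proof -
    have "of_int (3^(2*l) + (-1)^l * 3^l :: int) = (3::complex)^(2*l) + (-1)^l * 3^l" by simp
    also have "\<dots> = ?P + ?Q" unfolding c2l c1l ..
    finally show ?thesis .
  qed
  have ck2: "of_int (3^(2*l) - (-1)^l * 3^l :: int) = ?P - ?Q"
  proof -
    have "of_int (3^(2*l) - (-1)^l * 3^l :: int) = (3::complex)^(2*l) - (-1)^l * 3^l" by simp
    also have "\<dots> = ?P - ?Q" unfolding c2l c1l ..
    finally show ?thesis .
  qed
  have ck3: "of_int (3^(2*l) :: int) = ?P"
  proof -
    have "of_int (3^(2*l) :: int) = (3::complex)^(2*l)" by simp
    also have "\<dots> = ?P" unfolding c2l ..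
    finally show ?thesis .
  qed
  have E1: "\<And>x y. x \<in> V \<Longrightarrow> y \<in> V \<Longrightarrow> of_int (A1 x y) = Kc (0,1/3,1/3*w^2,1/3*w) x y"
    using ent1 lenV unfolding A1_def by metis
  have E2: "\<And>x y. x \<in> V \<Longrightarrow> y \<in> V \<Longrightarrow> of_int (A2 x y) = Kc (0,1/3,1/3*w,1/3*w^2) x y"
    using ent2 lenV unfolding A2_def by metis
  have E3: "\<And>x y. x \<in> V \<Longrightarrow> y \<in> V \<Longrightarrow> of_int (A3I x y) = Kc (0,1/3,1/3*1,1/3*1) x y"
  proof -
    fix x y assume "x \<in> V" "y \<in> V"
    then have "length x = length y" using lenV by simp
    then show "of_int (A3I x y) = Kc (0,1/3,1/3*1,1/3*1) x y" using ent3 unfolding A3I_def by simp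
  qed
  note M1 = matrix_facts[OF S3 E1[unfolded V_def] alg1[OF w_eq q t] algr1[OF w_eq q t] cb1 ca1 ck1, folded V_def]
  note M2 = matrix_facts[OF S3 E2[unfolded V_def] alg2[OF w_eq q t] algr2[OF w_eq q t] cb2 ca2 ck2, folded V_def]
  note M3 = matrix_facts[OF S3 E3[unfolded V_def] alg3[OF w_eq q t] algr3[OF w_eq q t] cb3 ca3 ck3, folded V_def]
  have hxx: "\<And>x. hamming x x = 0" by (simp add: hamming_def)
  have D1: "sym_partial_geometric_design V V A1 (3^(2*l+1)) (3^(2*l) + (-1)^l * 3^l)
      (3^(4*l-1) + (-1)^l * 3^(3*l) + 2 * 3^(2*l-1)) (3^(4*l-1) + (-1)^l * 3^(3*l) + 5 * 3^(2*l-1))"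
  proof (rule design_lemma[OF finV cardV _ _ M1(2) M1(1)])
    fix x y assume "x \<in> V" "y \<in> V"
    then have "length x = length y" using lenV by simp
    then show "A1 x y = A1 y x" unfolding A1_def using ksd_sym by metis
  next
    fix x y show "A1 x y = 0 \<or> A1 x y = 1"
      unfolding A1_def ksd_adj_def by auto
  qed
  have D2: "sym_partial_geometric_design V V A2 (3^(2*l+1)) (3^(2*l) - (-1)^l * 3^l)
      (3^(4*l-1) - (-1)^l * 3^(3*l) + 2 * 3^(2*l-1)) (3^(4*l-1) - (-1)^l * 3^(3*l) + 5 * 3^(2*l-1))"
  proof (rule design_lemma[OF finV cardV _ _ M2(2) M2(1)])
    fix x y assume "x \<in> V" "y \<in> V"
    then have "length x = length y" using lenV by simp
    then show "A2 x y = A2 y x" unfolding A2_def using ksd_sym by metis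
  next
    fix x y show "A2 x y = 0 \<or> A2 x y = 1"
      unfolding A2_def ksd_adj_def by auto
  qed
  have D3: "sym_partial_geometric_design V V A3I (3^(2*l+1)) (3^(2*l))
      (3^(4*l-1) - 3^(2*l-1)) (3^(4*l-1) + 2 * 3^(2*l-1))"
  proof (rule design_lemma[OF finV cardV _ _ M3(2) M3(1)])
    fix x y assume "x \<in> V" "y \<in> V"
    then have "length x = length y" using lenV by simp
    then show "A3I x y = A3I y x" unfolding A3I_def using ksd_sym by metis
  next
    fix x y show "A3I x y = 0 \<or> A3I x y = 1"
      unfolding A3I_def ksd_adj_def by (auto simp: hxx)
  qed
  have k12: "(3^(2*l) + (-1)^l * 3^l :: int) \<noteq> 3^(2*l) - (-1)^l * 3^l" by simp
  have k13: "(3^(2*l) + (-1)^l * 3^l :: int) \<noteq> 3^(2*l)" by simp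
  have k23: "(3^(2*l) - (-1)^l * 3^l :: int) \<noteq> 3^(2*l)" by simp
  have N12: "\<not> design_iso V V A1 V V A2"
  proof
    assume iso: "design_iso V V A1 V V A2"
    show False using noniso[OF iso neV M1(2) M2(2)] k12 by blast
  qed
  have N13: "\<not> design_iso V V A1 V V A3I"
  proof
    assume iso: "design_iso V V A1 V V A3I"
    show False using noniso[OF iso neV M1(2) M3(2)] k13 by blast
  qed
  have N23: "\<not> design_iso V V A2 V V A3I"
  proof
    assume iso: "design_iso V V A2 V V A3I"
    show False using noniso[OF iso neV M2(2) M3(2)] k23 by blast
  qed
  show ?thesis using M1(1) M2(1) M3(1) D1 D2 D3 N12 N13 N23 by blast
qed

end
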